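(* Let $0<\epsilon<1$ and let $C_1,\ldots,C_n\in\mathbb{R}^3$ be a Pareto-optimal market for $\textsc{ProductDesign}(2)$. Let $r=\max\{\operatorname{ppu}(C_i): i\in\{1,\ldots,n\}\}$, $E=1/(1-\epsilon)$, $\ell=\lceil\log_E n\rceil$, and for $i\in\{0,\ldots,\ell\}$ let $H_i=\{(p,q_1,q_2)\in\mathbb{R}^3: p-q_1-q_2=r(1-\epsilon)^i\}$. Then for every product $P^*=(p^*,q_1^*,q_2^* )\in\mathbb{R}^3$ there exists a product $P\in H_i$ for some $i\in\{0,\ldots,\ell\}$ with $\operatorname{profit}(P)\ge(1-\epsilon)\operatorname{profit}(P^* )$.
   Context: A product $P=(p,q_1,q_2)$ has price $p$ and qualities $q_1,q_2$; its profit per unit is $\operatorname{ppu}(P)=p-q_1-q_2$. A customer $C_i=(p_i,q_{i,1},q_{i,2})$ buys $P$ iff $p\le p_i$ and $q_j\ge q_{i,j}$ for $j=1,2$. $\operatorname{profit}(P)=\operatorname{ppu}(P)\cdot|\{i: C_i \text{ buys } P\}|$. The market is Pareto-optimal: there are no two customers $C_i,C_j$ with $q_{i,k}>q_{j,k}$ for all $k$ and $p_i<p_j$. *)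

theory Defs
  imports Complex_Main
begin

type_synonym point3 = "real \<times> real \<times> real"  (* (price, quality 1, quality 2) *)

definition ppu :: "point3 \<Rightarrow> real" where
  "ppu P = (case P of (p, q1, q2) \<Rightarrow> p - q1 - q2)"

definition buys :: "point3 \<Rightarrow> point3 \<Rightarrow> bool" where
  "buys Ci P = (case Ci of (pc, qi1, qi2) \<Rightarrow> case P of (p, q1, q2) \<Rightarrow>
      p \<le> pc \<and> q1 \<ge> qi1 \<and> q2 \<ge> qi2)"

definition profit :: "(nat \<Rightarrow> point3) \<Rightarrow> nat \<Rightarrow> point3 \<Rightarrow> real" where
  "profit C n P = ppu P * real (card {i \<in> {1..n}. buys (C i) P})"

definition pareto_optimal :: "(nat \<Rightarrow> point3) \<Rightarrow> nat \<Rightarrow> bool" where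
  "pareto_optimal C n = (\<not> (\<exists>i\<in>{1..n}. \<exists>j\<in>{1..n}.
      fst (snd (C i)) > fst (snd (C j)) \<and> snd (snd (C i)) > snd (snd (C j)) \<and>
      fst (C i) < fst (C j)))"

end

theory Submission
  imports Defs
begin

lemma card_S_le: "card {i \<in> {1..n}. buys (C i) P} \<le> n"
proof -
  have "card {i \<in> {1..n}. buys (C i) P} \<le> card {1..n}" by (rule card_mono) auto
  thus ?thesis by simp
qed

theorem lemma3:
  fixes \<epsilon> :: real and C :: "nat \<Rightarrow> point3" and n :: nat and Pstar :: point3
  assumes "0 < \<epsilon>" and "\<epsilon> < 1" and "n \<ge> 1"
    and "pareto_optimal C n"
  shows "let r = Max (ppu ` C ` {1..n}); E = 1 / (1 - \<epsilon>); l = \<lceil>log E (real n)\<rceil> in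
    \<exists>i::nat. int i \<le> l \<and> (\<exists>P. ppu P = r * (1 - \<epsilon>) ^ i \<and>
       profit C n P \<ge> (1 - \<epsilon>) * profit C n Pstar)"
proof -
  define r where "r = Max (ppu ` C ` {1..n})"
  define E where "E = 1 / (1 - \<epsilon>)"
  define l where "l = \<lceil>log E (real n)\<rceil>"
  let ?S = "\<lambda>P. {i \<in> {1..n}. buys (C i) P}"
  have fin: "finite (ppu ` C ` {1..n})" "ppu ` C ` {1..n} \<noteq> {}" using assms(3) by auto
  have rge: "\<And>i. i \<in> {1..n} \<Longrightarrow> ppu (C i) \<le> r" unfolding r_def using fin by auto
  obtain j where j: "j \<in> {1..n}" "ppu (C j) = r" unfolding r_def
    using Max_in[OF fin] by auto
  have E1: "E > 1" unfolding E_def using assms by (simp add: field_simps)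
  have logge: "log E (real n) \<ge> 0" using E1 assms(3) by simp
  have l0: "l \<ge> 0" unfolding l_def using logge by simp
  define L where "L = nat l"
  have lL: "int L = l" unfolding L_def using l0 by simp
  have EL: "real n \<le> E ^ L"
  proof -
    have "real n = E powr (log E (real n))" using E1 assms(3) by simp
    also have "\<dots> \<le> E powr (real L)"
      using E1 lL unfolding l_def by (intro powr_mono) (auto, linarith)
    also have "\<dots> = E ^ L" using E1 by (simp add: powr_realpow)
    finally show ?thesis .
  qed
  have epsL: "(1 - \<epsilon>) ^ L * real n \<le> 1"
  proof -
    have "(1 - \<epsilon>) ^ L * E ^ L = 1" unfolding E_def using assms
      by (simp add: power_mult_distrib[symmetric])
    moreover have "(1 - \<epsilon>) ^ L * real n \<le> (1 - \<epsilon>) ^ L * E ^ L"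
      using EL assms by (intro mult_left_mono) auto
    ultimately show ?thesis by simp
  qed
  have goal: "\<exists>i::nat. int i \<le> l \<and> (\<exists>P. ppu P = r * (1 - \<epsilon>) ^ i \<and>
       profit C n P \<ge> (1 - \<epsilon>) * profit C n Pstar)"
  proof (cases "profit C n Pstar \<le> 0")
    case True
    define M where "M = Min (fst ` snd ` C ` {1..n}) - 1"
    have M: "\<And>i. i \<in> {1..n} \<Longrightarrow> M < fst (snd (C i))" 
    proof -
      fix i assume "i \<in> {1..n}"
      hence "Min (fst ` snd ` C ` {1..n}) \<le> fst (snd (C i))" by (intro Min_le) auto
      thus "M < fst (snd (C i))" unfolding M_def by simp
    qed
    define P :: point3 where "P = (r + M, M, 0)"
    have "?S P = {}"
    proof -
      { fix i assume i: "i \<in> {1..n}" and b: "buys (C i) P"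
        obtain a b1 b2 where c: "C i = (a, b1, b2)" by (cases "C i") auto
        have "M < b1" using M[OF i] c by simp
        have "False" using b c \<open>M < b1\<close> unfolding P_def buys_def by auto }
      thus ?thesis by auto
    qed
    hence "profit C n P = 0" unfolding profit_def by simp
    moreover have "ppu P = r * (1 - \<epsilon>) ^ 0" unfolding P_def ppu_def by simp
    moreover have "(1 - \<epsilon>) * profit C n Pstar \<le> 0" using True assms
      by (intro mult_nonneg_nonpos) auto
    ultimately show ?thesis using l0
      by (intro exI[of _ 0] conjI exI[of _ P]) auto
  next
    case False
    hence pos: "profit C n Pstar > 0" by simp
    obtain ps q1 q2 where Ps: "Pstar = (ps, q1, q2)" by (cases Pstar) auto
    have ne: "?S Pstar \<noteq> {}"
    proof
      assume "?S Pstar = {}"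
      hence "profit C n Pstar = 0" unfolding profit_def by (simp only: card.empty)
      thus False using pos by simp
    qed
    have ppos: "ppu Pstar > 0"
    proof -
      have "real (card (?S Pstar)) \<ge> 0" by simp
      moreover have "ppu Pstar * real (card (?S Pstar)) > 0" using pos unfolding profit_def .
      ultimately show ?thesis unfolding zero_less_mult_iff by linarith
    qed
    obtain k where k: "k \<in> {1..n}" "buys (C k) Pstar" using ne by auto
    have "ppu Pstar \<le> ppu (C k)" using k(2) unfolding buys_def ppu_def Ps
      by (cases "C k") auto
    hence ple: "ppu Pstar \<le> r" using rge[OF k(1)] by simp
    have rpos: "r > 0" using ppos ple by simp
    show ?thesis
    proof (cases "r * (1 - \<epsilon>) ^ L \<le> ppu Pstar")
      case True
      define i where "i = (LEAST i. r * (1 - \<epsilon>) ^ i \<le> ppu Pstar)"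
      have i1: "r * (1 - \<epsilon>) ^ i \<le> ppu Pstar" unfolding i_def by (rule LeastI, rule True)
      have iL: "i \<le> L" unfolding i_def by (rule Least_le, rule True)
      have pi: "r * (1 - \<epsilon>) ^ i \<ge> (1 - \<epsilon>) * ppu Pstar"
      proof (cases i)
        case 0
        have "(1 - \<epsilon>) * ppu Pstar \<le> 1 * ppu Pstar" using ppos assms
          by (intro mult_right_mono) auto
        thus ?thesis using 0 ple by simp
      next
        case (Suc m)
        have "m < i" using Suc by simp
        hence "\<not> r * (1 - \<epsilon>) ^ m \<le> ppu Pstar" unfolding i_def using not_less_Least by blast
        hence "ppu Pstar < r * (1 - \<epsilon>) ^ m" by simp
        hence "(1 - \<epsilon>) * ppu Pstar \<le> (1 - \<epsilon>) * (r * (1 - \<epsilon>) ^ m)"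
          using assms by (intro mult_left_mono) auto
        thus ?thesis using Suc by (simp add: algebra_simps)
      qed
      define d where "d = ppu Pstar - r * (1 - \<epsilon>) ^ i"
      have d0: "d \<ge> 0" using i1 d_def by simp
      define P :: point3 where "P = (ps - d, q1, q2)"
      have pP: "ppu P = r * (1 - \<epsilon>) ^ i" unfolding P_def d_def using Ps
        by (simp add: ppu_def)
      have sub: "?S Pstar \<subseteq> ?S P"
      proof
        fix x assume "x \<in> ?S Pstar"
        thus "x \<in> ?S P" using d0 unfolding P_def Ps buys_def by (cases "C x") auto
      qed
      have cle: "card (?S Pstar) \<le> card (?S P)" by (rule card_mono[OF _ sub]) auto
      have "(1 - \<epsilon>) * profit C n Pstar = ((1 - \<epsilon>) * ppu Pstar) * real (card (?S Pstar))"
        unfolding profit_def by simp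
      also have "\<dots> \<le> ppu P * real (card (?S P))"
        using pi pP cle assms ppos rpos by (intro mult_mono) auto
      also have "\<dots> = profit C n P" unfolding profit_def by simp
      finally have "(1 - \<epsilon>) * profit C n Pstar \<le> profit C n P" .
      thus ?thesis using pP iL lL by (intro exI[of _ i] conjI exI[of _ P]) auto
    next
      case False
      have "profit C n Pstar \<le> ppu Pstar * real n"
        unfolding profit_def using card_S_le ppos by (intro mult_left_mono) auto
      also have "\<dots> \<le> r * (1 - \<epsilon>) ^ L * real n" using False by (intro mult_right_mono) auto
      also have "\<dots> = r * ((1 - \<epsilon>) ^ L * real n)" by (simp only: mult.assoc)
      also have "\<dots> \<le> r * 1" using epsL rpos by (intro mult_left_mono) auto
      finally have a: "profit C n Pstar \<le> r" by simp
      have "j \<in> ?S (C j)" using j unfolding buys_def by (cases "C j") auto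
      hence "card (?S (C j)) \<noteq> 0" by (subst card_0_eq) auto
      hence "card (?S (C j)) \<ge> 1" by linarith
      hence "r \<le> profit C n (C j)" unfolding profit_def j(2) using rpos by simp
      moreover have "(1 - \<epsilon>) * profit C n Pstar \<le> profit C n Pstar" using pos assms by simp
      ultimately show ?thesis using a j l0
        by (intro exI[of _ 0] conjI exI[of _ "C j"]) auto
    qed
  qed
  thus ?thesis unfolding r_def E_def l_def Let_def by simp
qed

end
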